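(* Fix total velocities $(\overline{u}_{T,k+1/2})_{k=1}^4\in\mathbb{R}^4$. Then for each phase $\ell\in\{w,\textit{nw}\}$, each $k\in\{1,\dots,4\}$ and each $j\in\{1,\dots,4\}$ with $j\neq k$, $$\frac{\partial\big(\overline{V}_{\ell,k+1/2}-\overline{V}_{\ell,k-1/2}\big)}{\partial S_{\ell,j}}\le 0 .$$
   Context: Indices in $\{1,2,3,4\}$ are cyclic mod 4 (vertices of an interaction region, labeled counterclockwise; half-interface $k+1/2$ joins vertex $k$ to vertex $k+1$, and $\overline{u}_{T,k+1/2}>0$ means flow from $k$ to $k+1$). $S_j$ is the wetting saturation at vertex $j$; $S_{w,j}=S_j$, $S_{\textit{nw},j}=1-S_j$, so $\partial/\partial S_{\textit{nw},j}=-\partial/\partial S_j$. Mobilities $\lambda_w,\lambda_{\textit{nw}}$ are positive differentiable functions of $S$, with $\lambda_w$ nondecreasing and $\lambda_{\textit{nw}}$ nonincreasing in $S$; $\lambda_T=\lambda_w+\lambda_{\textit{nw}}$; $\chi_{\ell,j}=\lambda_\ell(S_j)/\lambda_T(S_j)$, $\boldsymbol{\chi}_\ell=(\chi_{\ell,1},\dots,\chi_{\ell,4})^T$. Limiter $\varphi(r)=\dfrac{r^4+r^3+r^2+r}{r^4+r^3+r^2+r+1}$, $r\ge0$. $\overline{\omega}^V_{k+1/2}=\varphi(\max(0,\overline{u}_{T,k-1/2}/\overline{u}_{T,k+1/2}))$ if $\overline{u}_{T,k+1/2}>0$, $=\varphi(\max(0,\overline{u}_{T,k+3/2}/\overline{u}_{T,k+1/2}))$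 if $\overline{u}_{T,k+1/2}<0$, $=0$ otherwise. $\boldsymbol{A}$: $a_{kk}=1$, $a_{k,k-1}=-\overline{\omega}^V_{k+1/2}$ if $\overline{u}_{T,k+1/2}\ge0$ (else $0$), $a_{k,k+1}=-\overline{\omega}^V_{k+1/2}$ if $\overline{u}_{T,k+1/2}<0$ (else $0$), other entries $0$. $\boldsymbol{B}$: $b_{kk}=1-\overline{\omega}^V_{k+1/2}$ if $\overline{u}_{T,k+1/2}\ge0$ (else $0$), $b_{k,k+1}=1-\overline{\omega}^V_{k+1/2}$ if $\overline{u}_{T,k+1/2}<0$ (else $0$), other entries $0$. The interfacial mobility ratios are $\overline{\boldsymbol{\chi}}_\ell=\boldsymbol{A}^{-1}\boldsymbol{B}\boldsymbol{\chi}_\ell$ with entries $\overline{\chi}_{\ell,k+1/2}$, and the viscous flux is $\overline{V}_{\ell,k+1/2}=\overline{\chi}_{\ell,k+1/2}\overline{u}_{T,k+1/2}$. The total velocities (hence $\boldsymbol{A},\boldsymbol{B}$) are held fixed when differentiating. *)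

theory Defs
  imports "HOL-Analysis.Analysis" "HOL-Library.Numeral_Type"
begin

text \<open>Vertices of an interaction region are indexed by the type 4 (integers mod 4),
so index arithmetic k+1, k-1 is cyclic. Vertex label 4 is identified with 0.
The half-interface k+1/2 is indexed by k; hence u $ k is the total velocity
at k+1/2, u $ (k - 1) that at k-1/2 and u $ (k + 1) that at k+3/2.\<close>

datatype phase = Wet | NonWet

definition limiter :: "real \<Rightarrow> real" where
  "limiter r = (r^4 + r^3 + r^2 + r) / (r^4 + r^3 + r^2 + r + 1)"

definition omegaV :: "real^4 \<Rightarrow> 4 \<Rightarrow> real" where
  "omegaV u k =
     (if u $ k > 0 then limiter (max 0 (u $ (k - 1) / u $ k))
      else if u $ k < 0 then limiter (max 0 (u $ (k + 1) / u $ k))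
      else 0)"

definition matA :: "real^4 \<Rightarrow> real^4^4" where
  "matA u = (\<chi> k m.
      (if m = k then 1 else 0)
    + (if u $ k \<ge> 0 \<and> m = k - 1 then - omegaV u k else 0)
    + (if u $ k < 0 \<and> m = k + 1 then - omegaV u k else 0))"

definition matB :: "real^4 \<Rightarrow> real^4^4" where
  "matB u = (\<chi> k m.
      (if u $ k \<ge> 0 \<and> m = k then 1 - omegaV u k else 0)
    + (if u $ k < 0 \<and> m = k + 1 then 1 - omegaV u k else 0))"

definition mobility :: "(real \<Rightarrow> real) \<Rightarrow> (real \<Rightarrow> real) \<Rightarrow> phase \<Rightarrow> real \<Rightarrow> real" where
  "mobility lw lnw p s = (case p of Wet \<Rightarrow> lw s | NonWet \<Rightarrow> lnw s)"

definition chiVec :: "(real \<Rightarrow> real) \<Rightarrow> (real \<Rightarrow> real) \<Rightarrow> phase \<Rightarrow> real^4 \<Rightarrow> real^4" where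
  "chiVec lw lnw p S = (\<chi> j. mobility lw lnw p (S $ j) / (lw (S $ j) + lnw (S $ j)))"

definition chiBar :: "(real \<Rightarrow> real) \<Rightarrow> (real \<Rightarrow> real) \<Rightarrow> real^4 \<Rightarrow> phase \<Rightarrow> real^4 \<Rightarrow> real^4" where
  "chiBar lw lnw u p S = (matrix_inv (matA u) ** matB u) *v chiVec lw lnw p S"

definition viscFlux :: "(real \<Rightarrow> real) \<Rightarrow> (real \<Rightarrow> real) \<Rightarrow> real^4 \<Rightarrow> phase \<Rightarrow> real^4 \<Rightarrow> 4 \<Rightarrow> real" where
  "viscFlux lw lnw u p S k = chiBar lw lnw u p S $ k * u $ k"

definition phaseSat :: "phase \<Rightarrow> real^4 \<Rightarrow> 4 \<Rightarrow> real" where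
  "phaseSat p S j = (case p of Wet \<Rightarrow> S $ j | NonWet \<Rightarrow> 1 - S $ j)"

definition setPhaseSat :: "phase \<Rightarrow> real^4 \<Rightarrow> 4 \<Rightarrow> real \<Rightarrow> real^4" where
  "setPhaseSat p S j s =
     (\<chi> i. if i = j then (case p of Wet \<Rightarrow> s | NonWet \<Rightarrow> 1 - s) else S $ i)"

end

theory Submission imports Defs begin

definition nbr :: "real^4 \<Rightarrow> 4 \<Rightarrow> 4" where
  "nbr u k = (if u $ k \<ge> 0 then k - 1 else k + 1)"
definition bnb :: "real^4 \<Rightarrow> 4 \<Rightarrow> 4" where
  "bnb u k = (if u $ k \<ge> 0 then k else k + 1)"

lemma A_mult: "(matA u ** X) $ k $ j = X $ k $ j - omegaV u k * X $ (nbr u k) $ j"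
  unfolding matA_def matrix_matrix_mult_def nbr_def
  by (simp add: sum.distrib ring_distribs if_distrib[where f="\<lambda>a. a * _"] sum.delta cong: if_cong)

lemma B_ent: "matB u $ k $ j = (if j = bnb u k then 1 - omegaV u k else 0)"
  unfolding matB_def bnb_def by auto

lemma limiter_bounds: "r \<ge> 0 \<Longrightarrow> 0 \<le> limiter r \<and> limiter r < 1 \<and> limiter r \<le> r"
proof -
  assume r: "r \<ge> 0"
  define N where "N = r^4 + r^3 + r^2 + r"
  have N: "N \<ge> 0" using r by (simp add: N_def)
  have "N \<le> r * (N + 1)" using r unfolding N_def by (simp add: algebra_simps power_numeral_reduce)
  then show ?thesis using N unfolding limiter_def N_def[symmetric]
    by (simp add: divide_simps)
qed

lemma omega_bounds: "0 \<le> omegaV u k \<and> omegaV u k < 1"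
  unfolding omegaV_def using limiter_bounds by auto

lemma A_vec: "(matA u *v x) $ k = x $ k - omegaV u k * x $ (nbr u k)"
  unfolding matA_def matrix_vector_mult_def nbr_def
  by (simp add: sum.distrib ring_distribs if_distrib[where f="\<lambda>a. a * _"] cong: if_cong)

lemma ex_max4: "\<exists>i::4. \<forall>i'. f i' \<le> (f i :: real)"
proof -
  have "Max (range f) \<in> range f" by (rule Max_in) auto
  then obtain i where "f i = Max (range f)" by (metis imageE)
  moreover have "\<And>i'. f i' \<le> Max (range f)" by (rule Max_ge) auto
  ultimately show ?thesis by metis
qed

lemma A_inv: "invertible (matA u)"
proof -
  have "\<forall>x. matA u *v x = 0 \<longrightarrow> x = 0"
  proof (intro allI impI)
    fix x assume x0: "matA u *v x = 0"
    obtain i where i: "\<forall>i'. \<bar>x $ i'\<bar> \<le> \<bar>x $ i\<bar>" using ex_max4[of "\<lambda>i. \<bar>x $ i\<bar>"] by auto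
    have e: "x $ i = omegaV u i * x $ (nbr u i)" using arg_cong[OF x0, of "\<lambda>v. v $ i"] A_vec[of u x i] by simp
    have w: "0 \<le> omegaV u i" "omegaV u i < 1" using omega_bounds by auto
    have "\<bar>x $ i\<bar> = omegaV u i * \<bar>x $ (nbr u i)\<bar>" using e w by (simp add: abs_mult)
    also have "\<dots> \<le> omegaV u i * \<bar>x $ i\<bar>" using i w by (simp add: mult_left_mono)
    finally have "(1 - omegaV u i) * \<bar>x $ i\<bar> \<le> 0" by (simp add: algebra_simps)
    then have "\<bar>x $ i\<bar> \<le> 0" using w by (simp add: mult_le_0_iff)
    then have "\<bar>x $ i\<bar> = 0" by simp
    then show "x = 0" using i by (simp add: vec_eq_iff)
  qed
  then show ?thesis unfolding invertible_left_inverse matrix_left_invertible_ker[symmetric] by blast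
qed

lemma M_rel: "(matrix_inv (matA u) ** matB u) $ k $ j =
   omegaV u k * (matrix_inv (matA u) ** matB u) $ (nbr u k) $ j + (if j = bnb u k then 1 - omegaV u k else 0)"
proof -
  have "matA u ** matrix_inv (matA u) = mat 1"
    using A_inv[of u] unfolding invertible_def matrix_inv_def by (metis (mono_tags, lifting) someI_ex)
  then have "matA u ** (matrix_inv (matA u) ** matB u) = matB u" by (metis matrix_mul_assoc matrix_mul_lid)
  from arg_cong[OF this, of "\<lambda>X. X $ k $ j"] show ?thesis unfolding A_mult B_ent by simp
qed

lemma M_nonneg: "(matrix_inv (matA u) ** matB u) $ k $ j \<ge> 0"
proof -
  define M where "M = matrix_inv (matA u) ** matB u"
  obtain i where i: "\<forall>i'. - M $ i' $ j \<le> - M $ i $ j" using ex_max4[of "\<lambda>i. - M $ i $ j"] by auto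
  have w: "0 \<le> omegaV u i" "omegaV u i < 1" using omega_bounds by auto
  have "M $ i $ j \<ge> omegaV u i * M $ i $ j"
  proof -
    have "M $ i $ j \<ge> omegaV u i * M $ (nbr u i) $ j" using M_rel[of u i j] w unfolding M_def by auto
    moreover have "omegaV u i * M $ (nbr u i) $ j \<ge> omegaV u i * M $ i $ j" using i w by (simp add: mult_left_mono)
    ultimately show ?thesis by linarith
  qed
  then have "(1 - omegaV u i) * M $ i $ j \<ge> 0" by (simp add: algebra_simps)
  then have "M $ i $ j \<ge> 0" using w by (simp add: zero_le_mult_iff)
  then show ?thesis using i[rule_format, of k] unfolding M_def[symmetric] by linarith
qed

lemma coef:
  assumes jk: "j \<noteq> k"
  shows "(matrix_inv (matA u) ** matB u) $ k $ j * u $ k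
     \<le> (matrix_inv (matA u) ** matB u) $ (k - 1) $ j * u $ (k - 1)"
proof -
  define M where "M = matrix_inv (matA u) ** matB u"
  have Mk: "M $ k $ j = omegaV u k * M $ (nbr u k) $ j + (if j = bnb u k then 1 - omegaV u k else 0)"
    unfolding M_def by (rule M_rel)
  have Mk1: "M $ (k-1) $ j = omegaV u (k-1) * M $ (nbr u (k-1)) $ j + (if j = bnb u (k-1) then 1 - omegaV u (k-1) else 0)"
    unfolding M_def by (rule M_rel)
  have nn: "\<And>a. M $ a $ j \<ge> 0" unfolding M_def by (rule M_nonneg)
  have k1: "k - 1 + 1 = k" by simp
  have "M $ k $ j * u $ k \<le> M $ (k-1) $ j * u $ (k-1)"
  proof (cases "u $ k > 0")
    case True
    have Mk': "M $ k $ j = omegaV u k * M $ (k-1) $ j" using Mk True jk by (simp add: nbr_def bnb_def)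
    show ?thesis
    proof (cases "u $ (k-1) \<ge> 0")
      case True2: True
      have r: "u $ (k-1) / u $ k \<ge> 0" using True True2 by simp
      have "omegaV u k \<le> u $ (k-1) / u $ k" using limiter_bounds[OF r] True r by (simp add: omegaV_def)
      then have "omegaV u k * u $ k \<le> u $ (k-1)" using True by (simp add: pos_le_divide_eq)
      then have "M $ (k-1) $ j * (omegaV u k * u $ k) \<le> M $ (k-1) $ j * u $ (k-1)"
        using nn by (simp add: mult_left_mono)
      then show ?thesis using Mk' by (simp add: algebra_simps)
    next
      case False2: False
      have "u $ (k-1) / u $ k < 0" using True False2 by (simp add: divide_neg_pos)
      then have "omegaV u k = 0" using True by (simp add: omegaV_def limiter_def)
      moreover have "u $ k / u $ (k-1) < 0" using True False2 by (simp add: divide_pos_neg)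
      then have "omegaV u (k-1) = 0" using False2 by (simp add: omegaV_def limiter_def)
      then have "M $ (k-1) $ j = 0" using Mk1 False2 jk by (simp add: nbr_def bnb_def)
      ultimately show ?thesis using Mk' by simp
    qed
  next
    case False
    show ?thesis
    proof (cases "u $ (k-1) \<ge> 0")
      case True2: True
      have "M $ k $ j * u $ k \<le> 0" using False nn[of k] by (simp add: mult_nonneg_nonpos)
      moreover have "M $ (k-1) $ j * u $ (k-1) \<ge> 0" using True2 nn by simp
      ultimately show ?thesis by linarith
    next
      case False2: False
      have Mk1': "M $ (k-1) $ j = omegaV u (k-1) * M $ k $ j" using Mk1 False2 jk by (simp add: nbr_def bnb_def)
      have om: "omegaV u (k-1) = limiter (max 0 (u $ k / u $ (k-1)))" using False2 by (simp add: omegaV_def)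
      show ?thesis
      proof (cases "u $ k = 0")
        case True
        then show ?thesis using Mk1' om False2 by (simp add: limiter_def)
      next
        case False3: False
        have uk: "u $ k < 0" using False False3 by simp
        have r: "u $ k / u $ (k-1) \<ge> 0" using uk False2 by (simp add: divide_nonpos_neg)
        have "omegaV u (k-1) \<le> u $ k / u $ (k-1)" using limiter_bounds[OF r] om r by simp
        then have "omegaV u (k-1) * u $ (k-1) \<ge> u $ k" using False2 by (simp add: le_divide_eq)
        then have "M $ k $ j * u $ k \<le> M $ k $ j * (omegaV u (k-1) * u $ (k-1))"
          using nn by (simp add: mult_left_mono)
        then show ?thesis using Mk1' by (simp add: algebra_simps)
      qed
    qed
  qed
  then show ?thesis unfolding M_def .
qed

lemma mono_deriv_nonneg:
  fixes a :: "real \<Rightarrow> real"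
  assumes "mono a" "(a has_real_derivative da) (at x)" shows "da \<ge> 0"
proof (rule ccontr)
  assume "\<not> da \<ge> 0"
  then have "da < 0" by simp
  from DERIV_neg_dec_right[OF assms(2) this] obtain d where d: "d > 0" "\<forall>h>0. h < d \<longrightarrow> a x > a (x + h)" by blast
  then have "a x > a (x + d/2)" by simp
  moreover have "a x \<le> a (x + d/2)" using assms(1) d(1) by (simp add: monoD)
  ultimately show False by simp
qed

lemma antimono_deriv_nonpos:
  fixes a :: "real \<Rightarrow> real"
  assumes "antimono a" "(a has_real_derivative da) (at x)" shows "da \<le> 0"
proof (rule ccontr)
  assume "\<not> da \<le> 0"
  then have "da > 0" by simp
  from DERIV_pos_inc_right[OF assms(2) this] obtain d where d: "d > 0" "\<forall>h>0. h < d \<longrightarrow> a x < a (x + h)" by blast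
  then have "a x < a (x + d/2)" by simp
  moreover have "a x \<ge> a (x + d/2)" using assms(1) d(1) by (simp add: antimonoD)
  ultimately show False by simp
qed

lemma ratio_deriv:
  fixes a b :: "real \<Rightarrow> real"
  assumes pa: "\<And>t. a t > 0" and pb: "\<And>t. b t > 0" and ma: "mono a" and mb: "antimono b"
    and da: "(a has_real_derivative da) (at x)" and db: "(b has_real_derivative db) (at x)"
  shows "\<exists>D. ((\<lambda>t. a t / (a t + b t)) has_real_derivative D) (at x) \<and> D \<ge> 0"
proof -
  have ne: "a x + b x \<noteq> 0" using pa[of x] pb[of x] by simp
  have "((\<lambda>t. a t / (a t + b t)) has_real_derivative
     (da * (a x + b x) - a x * (da + db)) / ((a x + b x) * (a x + b x))) (at x)"
    by (rule DERIV_divide[OF da DERIV_add[OF da db] ne])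
  moreover have "(da * (a x + b x) - a x * (da + db)) / ((a x + b x) * (a x + b x)) \<ge> 0"
  proof -
    have "da \<ge> 0" by (rule mono_deriv_nonneg[OF ma da])
    moreover have "db \<le> 0" by (rule antimono_deriv_nonpos[OF mb db])
    ultimately have "da * b x - a x * db \<ge> 0" using pa[of x] pb[of x]
    proof -
      have "da * b x \<ge> 0" using \<open>da \<ge> 0\<close> pb[of x] by simp
      moreover have "a x * db \<le> 0" using \<open>db \<le> 0\<close> pa[of x] by (simp add: mult_nonneg_nonpos)
      ultimately show ?thesis by linarith
    qed
    then have "da * (a x + b x) - a x * (da + db) \<ge> 0" by (simp add: algebra_simps)
    then show ?thesis by simp
  qed
  ultimately show ?thesis by blast
qed

theorem mainTheorem4:
  fixes lw lnw :: "real \<Rightarrow> real" and u S :: "real^4" and p :: phase and k j :: 4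
  assumes pos_w: "\<And>s. lw s > 0"
    and pos_nw: "\<And>s. lnw s > 0"
    and diff_w: "\<And>s. lw differentiable (at s)"
    and diff_nw: "\<And>s. lnw differentiable (at s)"
    and mono_w: "mono lw"
    and anti_nw: "antimono lnw"
    and jk: "j \<noteq> k"
  shows "\<exists>D. ((\<lambda>s. viscFlux lw lnw u p (setPhaseSat p S j s) k
                  - viscFlux lw lnw u p (setPhaseSat p S j s) (k - 1))
              has_real_derivative D) (at (phaseSat p S j))
            \<and> D \<le> 0"
proof -
  define M where "M = matrix_inv (matA u) ** matB u"
  define sg where "sg s = (case p of Wet \<Rightarrow> s | NonWet \<Rightarrow> 1 - s)" for s :: real
  define g where "g s = mobility lw lnw p (sg s) / (lw (sg s) + lnw (sg s))" for s
  define r where "r i = (\<Sum>m\<in>UNIV - {j}. M $ i $ m * (mobility lw lnw p (S $ m) / (lw (S $ m) + lnw (S $ m))))" for i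
  have comp: "chiBar lw lnw u p (setPhaseSat p S j s) $ i = M $ i $ j * g s + r i" for s i
  proof -
    have "chiBar lw lnw u p (setPhaseSat p S j s) $ i
       = (\<Sum>m\<in>UNIV. M $ i $ m * chiVec lw lnw p (setPhaseSat p S j s) $ m)"
      unfolding chiBar_def M_def matrix_vector_mult_def by simp
    also have "\<dots> = M $ i $ j * chiVec lw lnw p (setPhaseSat p S j s) $ j
        + (\<Sum>m\<in>UNIV - {j}. M $ i $ m * chiVec lw lnw p (setPhaseSat p S j s) $ m)"
      by (rule sum.remove) auto
    also have "(\<Sum>m\<in>UNIV - {j}. M $ i $ m * chiVec lw lnw p (setPhaseSat p S j s) $ m) = r i"
      unfolding r_def by (rule sum.cong) (auto simp: chiVec_def setPhaseSat_def)
    also have "chiVec lw lnw p (setPhaseSat p S j s) $ j = g s"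
      unfolding chiVec_def setPhaseSat_def g_def sg_def by simp
    finally show ?thesis .
  qed
  define C where "C = M $ k $ j * u $ k - M $ (k-1) $ j * u $ (k-1)"
  have C: "C \<le> 0" using coef[OF jk, of u] unfolding C_def M_def by simp
  have feq: "(\<lambda>s. viscFlux lw lnw u p (setPhaseSat p S j s) k
                  - viscFlux lw lnw u p (setPhaseSat p S j s) (k - 1))
         = (\<lambda>s. C * g s + (r k * u $ k - r (k-1) * u $ (k-1)))"
    unfolding viscFlux_def comp C_def by (rule ext) (simp add: algebra_simps)
  define x where "x = phaseSat p S j"
  have dw: "\<And>t. \<exists>d. (lw has_real_derivative d) (at t)" using diff_w by (simp add: real_differentiable_def)
  have dnw: "\<And>t. \<exists>d. (lnw has_real_derivative d) (at t)" using diff_nw by (simp add: real_differentiable_def)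
  have "\<exists>Dg. (g has_real_derivative Dg) (at x) \<and> Dg \<ge> 0"
  proof (cases p)
    case Wet
    have ge: "g = (\<lambda>t. lw t / (lw t + lnw t))" unfolding g_def sg_def mobility_def Wet by simp
    obtain d1 where d1: "(lw has_real_derivative d1) (at x)" using dw by blast
    obtain d2 where d2: "(lnw has_real_derivative d2) (at x)" using dnw by blast
    show ?thesis unfolding ge by (rule ratio_deriv[OF pos_w pos_nw mono_w anti_nw d1 d2])
  next
    case NonWet
    have ge: "g = (\<lambda>t. lnw (1 - t) / (lnw (1 - t) + lw (1 - t)))"
      unfolding g_def sg_def mobility_def NonWet by (simp add: add.commute)
    obtain d1 where d1: "(lw has_real_derivative d1) (at (1 - x))" using dw by blast
    obtain d2 where d2: "(lnw has_real_derivative d2) (at (1 - x))" using dnw by blast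
    have e1: "((\<lambda>t. lw (1 - t)) has_real_derivative d1 * (-1)) (at x)"
      by (rule DERIV_chain2[where g="\<lambda>t. 1 - t", OF d1]) (auto intro!: derivative_eq_intros)
    have e2: "((\<lambda>t. lnw (1 - t)) has_real_derivative d2 * (-1)) (at x)"
      by (rule DERIV_chain2[where g="\<lambda>t. 1 - t", OF d2]) (auto intro!: derivative_eq_intros)
    have m1: "mono (\<lambda>t. lnw (1 - t))" using anti_nw by (auto simp: mono_def antimono_def)
    have m2: "antimono (\<lambda>t. lw (1 - t))" using mono_w by (auto simp: mono_def antimono_def)
    show ?thesis unfolding ge by (rule ratio_deriv[OF pos_nw pos_w m1 m2 e2 e1])
  qed
  then obtain Dg where Dg: "(g has_real_derivative Dg) (at x)" "Dg \<ge> 0" by blast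
  have "((\<lambda>s. C * g s + (r k * u $ k - r (k-1) * u $ (k-1))) has_real_derivative C * Dg + 0) (at x)"
    by (intro DERIV_add DERIV_cmult Dg(1) DERIV_const)
  moreover have "C * Dg + 0 \<le> 0" using C Dg(2) by (simp add: mult_nonpos_nonneg)
  ultimately show ?thesis unfolding feq x_def by blast
qed

end
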